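(* Let $N,R,k\in\mathbb{N}$. For every choice of bijections $g_1,\dots,g_R:[N]\to[N]$ there exists a $1$-layer transformer (with learned embeddings) with embedding dimension $d=\tilde O(R+k)$ and MLP width $\tilde O(R)$ that solves the $k$-hop factual recall problem with Chain-of-Thought: on every input $(s_0,r_1,\dots,r_k)\in[N]\times[R]^k$, generating autoregressively it produces tokens $s_1,\dots,s_k$ with $s_i=g_{r_i}(s_{i-1})$, so that its final output is $(g_{r_k}\circ\cdots\circ g_{r_1})(s_0)$.
   Context: Write $[N]=\{1,\dots,N\}$. Subjects are $[N]$, relations are $[R]$, each relation $r$ has a bijection $g_r:[N]\to[N]$. The transformer is over vocabulary $[N]\cup[R]$ with embeddings in $\mathbb{R}^d$; a layer applies (causal, softmax) self-attention $Z=\sum_h W_V^{(h)}X(A^{(h)})^\top$ with $A^{(h)}=\mathrm{softmax}((W_K^{(h)}X)^\top(W_Q^{(h)}X))$, a residual $\tilde X=Z+X$, and a column-wise ReLU MLP with residual $X'=\tilde X+\mathrm{MLP}(\tilde X)$. Chain-of-Thought means the model generates tokens autoregressively, each generated token (chosen by decoding the last position's output into the vocabulary) being appended to the sequence before the next forward pass. $\tilde O(\cdot)$ suppresses logarithmic factors. *)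

theory Defs
  imports Complex_Main
begin

datatype tok = Subj nat | Rel nat

definition vocab :: "nat \<Rightarrow> nat \<Rightarrow> tok set" where
  "vocab N R = Subj ` {1..N} \<union> Rel ` {1..R}"

text \<open>Vectors in R^d are functions nat \<Rightarrow> real, only the
coordinates 0..<d matter; matrices are nat \<Rightarrow> nat \<Rightarrow> real (row, column).\<close>
record tf =
  tf_dim :: nat
  tf_heads :: nat
  tf_width :: nat
  tf_emb :: "tok \<Rightarrow> nat \<Rightarrow> real"
  tf_pos :: "nat \<Rightarrow> nat \<Rightarrow> real"
  tf_WQ :: "nat \<Rightarrow> nat \<Rightarrow> nat \<Rightarrow> real"
  tf_WK :: "nat \<Rightarrow> nat \<Rightarrow> nat \<Rightarrow> real"
  tf_WV :: "nat \<Rightarrow> nat \<Rightarrow> nat \<Rightarrow> real"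
  tf_W1 :: "nat \<Rightarrow> nat \<Rightarrow> real"
  tf_b1 :: "nat \<Rightarrow> real"
  tf_W2 :: "nat \<Rightarrow> nat \<Rightarrow> real"
  tf_unemb :: "tok \<Rightarrow> nat \<Rightarrow> real"

definition matvec :: "(nat \<Rightarrow> nat \<Rightarrow> real) \<Rightarrow> nat \<Rightarrow> (nat \<Rightarrow> real) \<Rightarrow> nat \<Rightarrow> real" where
  "matvec A n x = (\<lambda>i. \<Sum>j<n. A i j * x j)"

definition tf_input :: "tf \<Rightarrow> tok list \<Rightarrow> nat \<Rightarrow> nat \<Rightarrow> real" where
  "tf_input M xs i = (\<lambda>a. tf_emb M (xs ! i) a + tf_pos M i a)"

definition attn_score :: "tf \<Rightarrow> tok list \<Rightarrow> nat \<Rightarrow> nat \<Rightarrow> nat \<Rightarrow> real" where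
  "attn_score M xs h i j =
     (\<Sum>a<tf_dim M. matvec (tf_WK M h) (tf_dim M) (tf_input M xs i) a *
                     matvec (tf_WQ M h) (tf_dim M) (tf_input M xs j) a)"

text \<open>Causal softmax attention weight of key position i for query position j (i \<le> j).\<close>
definition attn_weight :: "tf \<Rightarrow> tok list \<Rightarrow> nat \<Rightarrow> nat \<Rightarrow> nat \<Rightarrow> real" where
  "attn_weight M xs h i j =
     exp (attn_score M xs h i j) / (\<Sum>i'\<le>j. exp (attn_score M xs h i' j))"

definition attn_out :: "tf \<Rightarrow> tok list \<Rightarrow> nat \<Rightarrow> nat \<Rightarrow> real" where
  "attn_out M xs j = (\<lambda>a. \<Sum>h<tf_heads M. \<Sum>i\<le>j.
       attn_weight M xs h i j * matvec (tf_WV M h) (tf_dim M) (tf_input M xs i) a)"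

definition relu :: "real \<Rightarrow> real" where
  "relu x = max 0 x"

definition mlp :: "tf \<Rightarrow> (nat \<Rightarrow> real) \<Rightarrow> nat \<Rightarrow> real" where
  "mlp M v = (\<lambda>a. \<Sum>b<tf_width M. tf_W2 M a b *
       relu ((\<Sum>c<tf_dim M. tf_W1 M b c * v c) + tf_b1 M b))"

definition tf_output :: "tf \<Rightarrow> tok list \<Rightarrow> nat \<Rightarrow> nat \<Rightarrow> real" where
  "tf_output M xs j =
     (let xt = (\<lambda>a. attn_out M xs j a + tf_input M xs j a) in (\<lambda>a. xt a + mlp M xt a))"

definition logit :: "tf \<Rightarrow> tok list \<Rightarrow> tok \<Rightarrow> real" where
  "logit M xs t = (\<Sum>a<tf_dim M. tf_unemb M t a * tf_output M xs (length xs - 1) a)"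

definition decode :: "tf \<Rightarrow> nat \<Rightarrow> nat \<Rightarrow> tok list \<Rightarrow> tok option" where
  "decode M N R xs =
     (if \<exists>t\<in>vocab N R. \<forall>t'\<in>vocab N R. t' \<noteq> t \<longrightarrow> logit M xs t' < logit M xs t
      then Some (THE t. t \<in> vocab N R \<and>
                   (\<forall>t'\<in>vocab N R. t' \<noteq> t \<longrightarrow> logit M xs t' < logit M xs t))
      else None)"

fun cot_gen :: "tf \<Rightarrow> nat \<Rightarrow> nat \<Rightarrow> tok list \<Rightarrow> nat \<Rightarrow> tok list option" where
  "cot_gen M N R xs 0 = Some []"
| "cot_gen M N R xs (Suc n) =
     (case decode M N R xs of
        None \<Rightarrow> None
      | Some t \<Rightarrow> map_option (Cons t) (cot_gen M N R (xs @ [t]) n))"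

fun hops :: "(nat \<Rightarrow> nat \<Rightarrow> nat) \<Rightarrow> nat \<Rightarrow> nat list \<Rightarrow> nat list" where
  "hops g s [] = []"
| "hops g s (r # rs) = g r s # hops g (g r s) rs"

end

theory Submission imports Defs begin

definition P0 :: "nat \<Rightarrow> nat" where "P0 R = 4*R+2"

definition emb :: "nat \<Rightarrow> (nat \<Rightarrow> nat \<Rightarrow> nat) \<Rightarrow> tok \<Rightarrow> nat \<Rightarrow> real" where
  "emb R g t a = (case t of
      Subj s \<Rightarrow> (if a = 0 then 1 else if R+2 \<le> a \<and> a \<le> 2*R+1 then real (g (a-R-1) s) else 0)
    | Rel r \<Rightarrow> (if a = 0 then 1 else if a = r+1 then 1 else 0))"

definition mdl :: "nat \<Rightarrow> nat \<Rightarrow> nat \<Rightarrow> (nat \<Rightarrow> nat \<Rightarrow> nat) \<Rightarrow> tf" where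
  "mdl N R k g = (|
     tf_dim = 4*R+2+2*k,
     tf_heads = 2,
     tf_width = 4*R,
     tf_emb = emb R g,
     tf_pos = (\<lambda>i a. if a = P0 R + i then 1 else 0),
     tf_WQ = (\<lambda>h a b. if h = 0 \<and> P0 R + 1 \<le> a \<and> b = a + k - 1 then ln (6*real k) else 0),
     tf_WK = (\<lambda>h a b. if h = 0 \<and> P0 R \<le> a \<and> b = a then 1 else 0),
     tf_WV = (\<lambda>h a b. if ((h = 0 \<and> 2*R+2 \<le> a \<and> a \<le> 3*R+1) \<or> (h = 1 \<and> 3*R+2 \<le> a \<and> a \<le> 4*R+1))
                        \<and> b = a - 2*R then 1 else 0),
     tf_W1 = (\<lambda>b c. (if b mod 4 = 0 \<and> c = R+2+b div 4 then 1 else 0)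
                 + (if b mod 4 = 2 \<and> c = 3*R+2+b div 4 then real k + 1 else 0)
                 + (if c = 2*R+2+b div 4 then 4*real N*(real k+1) else 0)
                 + (if 2 \<le> b mod 4 \<and> c = P0 R + k then 4*real N*(real k+1) else 0)),
     tf_b1 = (\<lambda>b. if b mod 4 < 2 then -(2*real N*(real k+1)) else -(6*real N*(real k+1))),
     tf_W2 = (\<lambda>a b. if a = 1 then (if b mod 4 = 0 \<or> b mod 4 = 2 then 1 else -1) else 0),
     tf_unemb = (\<lambda>t a. case t of Subj s \<Rightarrow> (if a = 0 then -(real s^2) else if a = 1 then 2*real s else 0)
                                | Rel r \<Rightarrow> (if a = 0 then -1 else 0)) |)"


lemma hops_len: "length (hops g s rs) = length rs"
  by (induction rs arbitrary: s) auto

lemma hops_nth: "m < length rs \<Longrightarrow>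
   hops g s rs ! m = g (rs!m) (if m = 0 then s else hops g s rs ! (m-1))"
proof (induction rs arbitrary: s m)
  case Nil then show ?case by simp
next
  case (Cons r rs)
  show ?case
  proof (cases m)
    case 0 then show ?thesis by simp
  next
    case (Suc m') then show ?thesis using Cons by (cases m') auto
  qed
qed

lemma hops_set: "(\<forall>r\<in>{1..R}. bij_betw (g r) {1..N} {1..N}) \<Longrightarrow> s \<in> {1..N} \<Longrightarrow> set rs \<subseteq> {1..R}
   \<Longrightarrow> set (hops g s rs) \<subseteq> {1..N}"
proof (induction rs arbitrary: s)
  case Nil then show ?case by simp
next
  case (Cons r rs)
  have "r \<in> {1..R}" using Cons.prems by simp
  then have "bij_betw (g r) {1..N} {1..N}" using Cons.prems(1) by blast
  then have "g r s \<in> {1..N}" using Cons.prems(2) bij_betwE by blast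
  then show ?case using Cons by auto
qed

definition tabv :: "(nat \<Rightarrow> nat \<Rightarrow> nat) \<Rightarrow> tok \<Rightarrow> nat \<Rightarrow> real" where
  "tabv g t r = (case t of Subj s \<Rightarrow> real (g r s) | Rel _ \<Rightarrow> 0)"

lemma sum4: fixes f :: "nat \<Rightarrow> real" and n :: nat shows "(\<Sum>b<4*n. f b) = (\<Sum>r<n. f (4*r) + f (4*r+1) + f (4*r+2) + (f (4*r+3)::real))"
proof (induction n)
  case 0 then show ?case by simp
next
  case (Suc n)
  have e: "4 * Suc n = Suc (Suc (Suc (Suc (4*n))))" by simp
  show ?case unfolding e using Suc by (simp add: add.assoc eval_nat_numeral)
qed

definition gate :: "real \<Rightarrow> real \<Rightarrow> real \<Rightarrow> real \<Rightarrow> real \<Rightarrow> real \<Rightarrow> real" where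
  "gate N K T U a p = relu (T + 4*N*K*a - 2*N*K) - relu (4*N*K*a - 2*N*K)
      + relu (K*U + 4*N*K*a - 6*N*K + 4*N*K*p) - relu (4*N*K*a - 6*N*K + 4*N*K*p)"

lemma sdeltaP: fixes w :: real shows "finite A \<Longrightarrow> (\<Sum>c\<in>A. (if P \<and> c = e then w else 0) * v c) = (if P \<and> e \<in> A then w * v e else 0)"
proof -
  assume A: "finite A"
  have "(\<Sum>c\<in>A. (if P \<and> c = e then w else 0) * v c) = (\<Sum>c\<in>A. if P \<and> c = e then w * v e else 0)"
    by (rule sum.cong) auto
  then show ?thesis using A by (cases P) (simp_all add: sum.delta)
qed

lemma sdelta1: fixes w :: real shows "finite A \<Longrightarrow> (\<Sum>c\<in>A. (if c = e then w else 0) * v c) = (if e \<in> A then w * v e else 0)"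
  using sdeltaP[of A True e w v] by simp

lemma relu_pos: "0 \<le> z \<Longrightarrow> relu z = z" by (simp add: relu_def)
lemma relu_neg: "z \<le> 0 \<Longrightarrow> relu z = 0" by (simp add: relu_def)

lemma gate_lin: "gate N K T U a p = relu (T + 4*(N*K*a) - 2*(N*K)) - relu (4*(N*K*a) - 2*(N*K))
   + relu (K*U + 4*(N*K*a) - 6*(N*K) + 4*(N*K)*p) - relu (4*(N*K*a) - 6*(N*K) + 4*(N*K)*p)"
  unfolding gate_def by (simp add: algebra_simps)

lemma gate_on:
  fixes N K T U a p :: real
  assumes "0 \<le> N" "1 \<le> K" "0 \<le> T" "T \<le> N" "0 \<le> U" "U \<le> N" "3/4 \<le> a" "a \<le> 1"
    "p = 0 \<or> (p = 1 \<and> T = 0)"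
  shows "gate N K T U a p = (if p = 1 then K*U else T)"
proof -
  have nk: "0 \<le> N*K" using assms by simp
  have h1: "N*K*a \<ge> N*K*(3/4)" using mult_left_mono[OF assms(7) nk] by simp
  have h2: "N*K*a \<le> N*K" using mult_left_mono[OF assms(8) nk] by simp
  have h3: "K*U \<le> K*N" using mult_left_mono[OF assms(6)] assms(2) by simp
  have h4: "0 \<le> K*U" using assms by simp
  have h5: "K*N = N*K" by simp
  show ?thesis using assms(9)
  proof
    assume p: "p = 0"
    have e0: "4*(N*K)*p = 0" using p by simp
    have "relu (T + 4*(N*K*a) - 2*(N*K)) = T + 4*(N*K*a) - 2*(N*K)" by (rule relu_pos) (use h1 nk assms in linarith)
    moreover have "relu (4*(N*K*a) - 2*(N*K)) = 4*(N*K*a) - 2*(N*K)" by (rule relu_pos) (use h1 nk in linarith)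
    moreover have "relu (K*U + 4*(N*K*a) - 6*(N*K) + 4*(N*K)*p) = 0" by (rule relu_neg) (use h2 h3 h5 nk e0 in linarith)
    moreover have "relu (4*(N*K*a) - 6*(N*K) + 4*(N*K)*p) = 0" by (rule relu_neg) (use h2 nk e0 in linarith)
    ultimately show ?thesis unfolding gate_lin using p by simp
  next
    assume p: "p = 1 \<and> T = 0"
    have e1: "4*(N*K)*p = 4*(N*K)" using p by simp
    have "relu (T + 4*(N*K*a) - 2*(N*K)) = relu (4*(N*K*a) - 2*(N*K))" using p by simp
    moreover have "relu (K*U + 4*(N*K*a) - 6*(N*K) + 4*(N*K)*p) = K*U + 4*(N*K*a) - 6*(N*K) + 4*(N*K)*p"
      by (rule relu_pos) (use h1 h4 nk e1 in linarith)
    moreover have "relu (4*(N*K*a) - 6*(N*K) + 4*(N*K)*p) = 4*(N*K*a) - 6*(N*K) + 4*(N*K)*p"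
      by (rule relu_pos) (use h1 nk e1 in linarith)
    ultimately show ?thesis unfolding gate_lin using p by simp
  qed
qed

lemma gate_off:
  fixes N K T U a p :: real
  assumes "0 \<le> N" "1 \<le> K" "T \<le> N" "U \<le> N" "a \<le> 1/4" "p = 0 \<or> p = 1"
  shows "gate N K T U a p = 0"
proof -
  have nk: "0 \<le> N*K" using assms by simp
  have h2: "N*K*a \<le> N*K*(1/4)" using mult_left_mono[OF assms(5) nk] by simp
  have h3: "K*U \<le> K*N" using mult_left_mono[OF assms(4)] assms(2) by simp
  have h5: "N \<le> N*K" using mult_left_mono[OF assms(2) assms(1)] by simp
  have h6: "K*N = N*K" by simp
  have p: "0 \<le> p" "p \<le> 1" using assms(6) by auto
  have h7: "N*K*p \<le> N*K" using mult_left_mono[OF p(2) nk] by simp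
  have e: "4*(N*K)*p = 4*(N*K*p)" by simp
  have "relu (T + 4*(N*K*a) - 2*(N*K)) = 0" by (rule relu_neg) (use h2 h5 assms in linarith)
  moreover have "relu (4*(N*K*a) - 2*(N*K)) = 0" by (rule relu_neg) (use h2 nk in linarith)
  moreover have "relu (K*U + 4*(N*K*a) - 6*(N*K) + 4*(N*K)*p) = 0" unfolding e by (rule relu_neg) (use h2 h3 h6 h7 in linarith)
  moreover have "relu (4*(N*K*a) - 6*(N*K) + 4*(N*K)*p) = 0" unfolding e by (rule relu_neg) (use h2 h7 nk in linarith)
  ultimately show ?thesis unfolding gate_lin by simp
qed

lemma sum01: fixes F :: "nat \<Rightarrow> real"
  assumes "2 \<le> n" "\<And>a. 2 \<le> a \<Longrightarrow> F a = 0" shows "(\<Sum>a<n. F a) = F 0 + F 1"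
proof -
  have u: "{..<n} = {..<2} \<union> {2..<n}" using assms(1) by auto
  have "(\<Sum>a<n. F a) = (\<Sum>a<2. F a) + (\<Sum>a\<in>{2..<n}. F a)"
    unfolding u by (rule sum.union_disjoint) auto
  also have "(\<Sum>a\<in>{2..<n}. F a) = 0" using assms(2) by (intro sum.neutral) auto
  finally show ?thesis by (simp add: numeral_2_eq_2)
qed

context
  fixes N R k :: nat and g :: "nat \<Rightarrow> nat \<Rightarrow> nat" and s0 :: nat and rs ss :: "nat list"
  assumes N1: "N \<ge> 1" and R1: "R \<ge> 1" and bij: "\<forall>r\<in>{1..R}. bij_betw (g r) {1..N} {1..N}"
  and s0: "s0 \<in> {1..N}" and rsl: "length rs = k" and rss: "set rs \<subseteq> {1..R}"
  and sss: "set ss \<subseteq> {1..N}" and ssl: "length ss < k"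
begin

abbreviation "M \<equiv> mdl N R k g"
abbreviation "xs \<equiv> Subj s0 # map Rel rs @ map Subj ss"
abbreviation "j \<equiv> k + length ss"
abbreviation "x \<equiv> tf_input M xs"

lemma gin: "r \<in> {1..R} \<Longrightarrow> s \<in> {1..N} \<Longrightarrow> g r s \<in> {1..N}"
proof -
  assume a: "r \<in> {1..R}" "s \<in> {1..N}"
  then have "bij_betw (g r) {1..N} {1..N}" using bij by blast
  then show ?thesis using a(2) bij_betwE by blast
qed

lemma len_xs: "length xs = j + 1" using rsl by simp

lemma rsin: "i < k \<Longrightarrow> rs!i \<in> {1..R}"
  using rss rsl nth_mem by blast

lemma ssin: "i < length ss \<Longrightarrow> ss!i \<in> {1..N}"
  using sss nth_mem by blast

lemma tok: "i \<le> j \<Longrightarrow> xs ! i = (if i = 0 then Subj s0 else if i \<le> k then Rel (rs!(i-1)) else Subj (ss!(i-k-1)))"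
proof -
  assume i: "i \<le> j"
  show ?thesis
  proof (cases i)
    case 0 then show ?thesis by simp
  next
    case (Suc i')
    then have "xs ! i = (map Rel rs @ map Subj ss) ! i'" by simp
    also have "\<dots> = (if i' < k then Rel (rs!i') else Subj (ss!(i'-k)))"
      using i Suc rsl by (simp add: nth_append)
    finally show ?thesis using Suc by auto
  qed
qed

lemma x_eq: "x i a = emb R g (xs!i) a + (if a = P0 R + i then 1 else 0)"
  unfolding tf_input_def mdl_def by simp

lemma x_hi: assumes "i \<le> j" "P0 R \<le> a" shows "x i a = (if a = P0 R + i then 1 else 0)"
proof -
  have "emb R g (xs!i) a = 0"
  proof (cases "i = 0 \<or> i > k")
    case True then show ?thesis using assms tok[OF assms(1)] by (auto simp: emb_def P0_def)
  next
    case False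
    then have "i - 1 < k" by auto
    then have "rs!(i-1) \<in> {1..R}" by (rule rsin)
    then show ?thesis using False assms tok[OF assms(1)] by (auto simp: emb_def P0_def)
  qed
  then show ?thesis by (simp add: x_eq)
qed

lemma kpos: "k \<ge> 1" using ssl by simp

lemma dimM: "tf_dim M = P0 R + 2*k" unfolding mdl_def P0_def by simp

lemma sdelta: "finite A \<Longrightarrow> (\<Sum>b\<in>A. if P \<and> b = c then f b else 0) = (if P \<and> c \<in> A then f c else 0)"
  by (cases P) (simp_all add: sum.delta)

lemma mvK0: "matvec (tf_WK M 0) (tf_dim M) v a = (if P0 R \<le> a \<and> a < tf_dim M then v a else 0)"
proof -
  have "matvec (tf_WK M 0) (tf_dim M) v a = (\<Sum>b<tf_dim M. if P0 R \<le> a \<and> b = a then v b else 0)"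
    unfolding matvec_def by (rule sum.cong) (auto simp: mdl_def)
  also have "\<dots> = (if P0 R \<le> a \<and> a < tf_dim M then v a else 0)"
    by (subst sdelta) auto
  finally show ?thesis .
qed

lemma mvQ0: "matvec (tf_WQ M 0) (tf_dim M) v a =
   (if P0 R + 1 \<le> a \<and> a + k - 1 < tf_dim M then ln (6*real k) * v (a + k - 1) else 0)"
proof -
  have "matvec (tf_WQ M 0) (tf_dim M) v a =
      (\<Sum>b<tf_dim M. if P0 R + 1 \<le> a \<and> b = a + k - 1 then ln (6*real k) * v b else 0)"
    unfolding matvec_def by (rule sum.cong) (auto simp: mdl_def)
  also have "\<dots> = (if P0 R + 1 \<le> a \<and> a + k - 1 < tf_dim M then ln (6*real k) * v (a + k - 1) else 0)"
    by (subst sdelta) auto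
  finally show ?thesis .
qed

lemma mvQ1: "matvec (tf_WQ M (Suc 0)) (tf_dim M) v a = 0"
  unfolding matvec_def mdl_def by simp

lemma mvV0: "matvec (tf_WV M 0) (tf_dim M) v a = (if 2*R+2 \<le> a \<and> a \<le> 3*R+1 then v (a - 2*R) else 0)"
proof -
  have "matvec (tf_WV M 0) (tf_dim M) v a =
      (\<Sum>b<tf_dim M. if (2*R+2 \<le> a \<and> a \<le> 3*R+1) \<and> b = a - 2*R then v b else 0)"
    unfolding matvec_def by (rule sum.cong) (auto simp: mdl_def)
  also have "\<dots> = (if 2*R+2 \<le> a \<and> a \<le> 3*R+1 then v (a - 2*R) else 0)"
    by (subst sdelta) (auto simp: dimM P0_def)
  finally show ?thesis .
qed

lemma mvV1: "matvec (tf_WV M (Suc 0)) (tf_dim M) v a = (if 3*R+2 \<le> a \<and> a \<le> 4*R+1 then v (a - 2*R) else 0)"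
proof -
  have "matvec (tf_WV M (Suc 0)) (tf_dim M) v a =
      (\<Sum>b<tf_dim M. if (3*R+2 \<le> a \<and> a \<le> 4*R+1) \<and> b = a - 2*R then v b else 0)"
    unfolding matvec_def by (rule sum.cong) (auto simp: mdl_def)
  also have "\<dots> = (if 3*R+2 \<le> a \<and> a \<le> 4*R+1 then v (a - 2*R) else 0)"
    by (subst sdelta) (auto simp: dimM P0_def)
  finally show ?thesis .
qed

lemma score0: assumes "i \<le> j"
  shows "attn_score M xs 0 i j = (if i + k = j + 1 then ln (6*real k) else 0)"
proof -
  let ?L = "ln (6*real k)"
  have "attn_score M xs 0 i j = (\<Sum>a<tf_dim M. if a = P0 R + i then (if i + k = j + 1 then ?L else 0) else 0)"
    unfolding attn_score_def
  proof (rule sum.cong)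
    fix a assume a: "a \<in> {..<tf_dim M}"
    show "matvec (tf_WK M 0) (tf_dim M) (x i) a * matvec (tf_WQ M 0) (tf_dim M) (x j) a =
          (if a = P0 R + i then (if i + k = j + 1 then ?L else 0) else 0)"
    proof (cases "P0 R \<le> a")
      case False then show ?thesis by (simp add: mvK0)
    next
      case True
      have xi: "x i a = (if a = P0 R + i then 1 else 0)" using x_hi[OF assms True] .
      show ?thesis
      proof (cases "a = P0 R + i")
        case False then show ?thesis using xi by (simp add: mvK0)
      next
        case eq: True
        show ?thesis
        proof (cases "P0 R + 1 \<le> a \<and> a + k - 1 < tf_dim M")
          case True
          have "P0 R \<le> a + k - 1" using eq kpos by simp
          then have xj: "x j (a + k - 1) = (if a + k - 1 = P0 R + j then 1 else 0)"
            using x_hi[of j "a+k-1"] by blast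
          show ?thesis unfolding mvK0 mvQ0 using True eq a xi xj by auto
        next
          case False
          then have "\<not> (i + k = j + 1)" using eq ssl kpos by (auto simp: dimM)
          then show ?thesis using False eq a xi by (auto simp: mvK0 mvQ0)
        qed
      qed
    qed
  qed simp
  also have "\<dots> = (if i + k = j + 1 then ?L else 0)"
    using assms ssl by (simp add: dimM)
  finally show ?thesis .
qed

lemma score1: "attn_score M xs (Suc 0) i j = 0"
  unfolding attn_score_def by (simp add: mvQ1)

abbreviation "istar \<equiv> length ss + 1"

lemma expscore0: assumes "i \<le> j"
  shows "exp (attn_score M xs 0 i j) = (if i = istar then 6*real k else 1)"
  using score0[OF assms] kpos by auto

lemma denom0: "(\<Sum>i'\<le>j. exp (attn_score M xs 0 i' j)) = 6*real k + real j"
proof -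
  have "(\<Sum>i'\<le>j. exp (attn_score M xs 0 i' j)) = (\<Sum>i'\<le>j. 1 + (if i' = istar then 6*real k - 1 else 0))"
    by (rule sum.cong) (auto simp: expscore0)
  also have "\<dots> = real j + 1 + (6 * real k - 1)"
    using ssl by (simp add: sum.distrib sum.delta)
  finally show ?thesis by simp
qed

lemma w0: "i \<le> j \<Longrightarrow> attn_weight M xs 0 i j = (if i = istar then 6*real k else 1) / (6*real k + real j)"
  unfolding attn_weight_def denom0 by (simp add: expscore0)

lemma w1: "attn_weight M xs (Suc 0) i j = 1 / (real j + 1)"
proof -
  have "(\<Sum>i'\<le>j. exp (attn_score M xs (Suc 0) i' j)) = real j + 1" by (simp add: score1)
  then show ?thesis unfolding attn_weight_def by (simp add: score1)
qed


lemma tokcases: assumes "i \<le> j"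
  shows "(\<exists>s\<in>{1..N}. xs!i = Subj s) \<or> (\<exists>r'\<in>{1..R}. xs!i = Rel r')"
proof -
  consider "i = 0" | "0 < i \<and> i \<le> k" | "k < i" by linarith
  then show ?thesis
  proof cases
    case 1 then show ?thesis using s0 by simp
  next
    case 2
    then have "i - 1 < k" by auto
    then have "rs!(i-1) \<in> {1..R}" by (rule rsin)
    then show ?thesis using 2 tok[OF assms] by auto
  next
    case 3
    then have "i - k - 1 < length ss" using assms by auto
    then have "ss!(i-k-1) \<in> {1..N}" by (rule ssin)
    then show ?thesis using 3 tok[OF assms] by auto
  qed
qed

lemma xA: assumes "i \<le> j" "r \<in> {1..R}" shows "x i (r+1) = (if xs!i = Rel r then 1 else 0)"
  using tokcases[OF assms(1)] assms(2) by (auto simp: x_eq emb_def P0_def)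

lemma xT: assumes "i \<le> j" "r \<in> {1..R}" shows "x i (R+1+r) = tabv g (xs!i) r"
  using tokcases[OF assms(1)] assms(2) by (auto simp: x_eq emb_def P0_def tabv_def)

lemma tabv_bd: assumes "i \<le> j" "r \<in> {1..R}" shows "0 \<le> tabv g (xs!i) r \<and> tabv g (xs!i) r \<le> real N"
proof -
  have "s \<in> {1..N} \<Longrightarrow> real (g r s) \<le> real N" for s using gin[OF assms(2)] by auto
  then show ?thesis using tokcases[OF assms(1)] by (auto simp: tabv_def)
qed

lemma xS: assumes "i \<le> j" "r \<in> {1..R}" shows "x i (2*R+1+r) = 0"
  using tokcases[OF assms(1)] assms(2) by (auto simp: x_eq emb_def P0_def)

lemma xT2: assumes "i \<le> j" "r \<in> {1..R}" shows "x i (3*R+1+r) = 0"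
  using tokcases[OF assms(1)] assms(2) by (auto simp: x_eq emb_def P0_def)

lemma x0: assumes "i \<le> j" shows "x i 0 = 1"
  using tokcases[OF assms(1)] by (auto simp: x_eq emb_def P0_def)

lemma x1: assumes "i \<le> j" shows "x i 1 = 0"
  using tokcases[OF assms(1)] by (auto simp: x_eq emb_def P0_def)

lemma attn_eq: "attn_out M xs j a =
   (\<Sum>i\<le>j. attn_weight M xs 0 i j * matvec (tf_WV M 0) (tf_dim M) (x i) a) +
   (\<Sum>i\<le>j. attn_weight M xs (Suc 0) i j * matvec (tf_WV M (Suc 0)) (tf_dim M) (x i) a)"
proof -
  have "tf_heads M = Suc (Suc 0)" by (simp add: mdl_def)
  then show ?thesis unfolding attn_out_def by simp
qed

abbreviation "xt \<equiv> (\<lambda>a. attn_out M xs j a + x j a)"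

lemma xt_S: assumes "r \<in> {1..R}"
  shows "xt (2*R+1+r) = (\<Sum>i\<le>j. attn_weight M xs 0 i j * (if xs!i = Rel r then 1 else 0))"
proof -
  have e: "2*R+1+r - 2*R = r + 1" by simp
  have "attn_out M xs j (2*R+1+r) = (\<Sum>i\<le>j. attn_weight M xs 0 i j * x i (r+1))"
    unfolding attn_eq mvV0 mvV1 using assms e by simp
  moreover have "(\<Sum>i\<le>j. attn_weight M xs 0 i j * x i (r+1)) =
      (\<Sum>i\<le>j. attn_weight M xs 0 i j * (if xs!i = Rel r then 1 else 0))"
    by (rule sum.cong) (use xA assms in auto)
  moreover have "x j (2*R+1+r) = 0" using xS assms by simp
  ultimately show ?thesis by simp
qed

lemma xt_T2: assumes "r \<in> {1..R}"
  shows "xt (3*R+1+r) = (\<Sum>i\<le>j. 1 / (real j + 1) * tabv g (xs!i) r)"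
proof -
  have e: "3*R+1+r - 2*R = R + 1 + r" by simp
  have "attn_out M xs j (3*R+1+r) = (\<Sum>i\<le>j. attn_weight M xs (Suc 0) i j * x i (R+1+r))"
    unfolding attn_eq mvV0 mvV1 using assms e by simp
  moreover have "(\<Sum>i\<le>j. attn_weight M xs (Suc 0) i j * x i (R+1+r)) =
      (\<Sum>i\<le>j. 1 / (real j + 1) * tabv g (xs!i) r)"
    by (rule sum.cong) (use xT assms w1 in auto)
  moreover have "x j (3*R+1+r) = 0" using xT2 assms by simp
  ultimately show ?thesis by simp
qed

lemma xt_T: assumes "r \<in> {1..R}" shows "xt (R+1+r) = tabv g (xs!j) r"
proof -
  have "attn_out M xs j (R+1+r) = 0" unfolding attn_eq mvV0 mvV1 using assms by simp
  then show ?thesis using xT[of j r] assms by simp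
qed

lemma xt_P: "xt (P0 R + k) = (if j = k then 1 else 0)"
proof -
  have "attn_out M xs j (P0 R + k) = 0" unfolding attn_eq mvV0 mvV1 by (simp add: P0_def)
  then show ?thesis using x_hi[of j "P0 R + k"] by simp
qed

lemma xt_0: "xt 0 = 1"
proof -
  have "attn_out M xs j 0 = 0" unfolding attn_eq mvV0 mvV1 by simp
  then show ?thesis using x0[of j] by simp
qed
lemma xt_1: "xt 1 = 0"
proof -
  have "attn_out M xs j 1 = 0" unfolding attn_eq mvV0 mvV1 by simp
  then show ?thesis using x1[of j] by simp
qed

lemma preact: assumes "b < 4*R"
  shows "(\<Sum>c<tf_dim M. tf_W1 M b c * v c) =
     (if b mod 4 = 0 then v (R+2+b div 4) else 0)
   + (if b mod 4 = 2 then (real k + 1) * v (3*R+2+b div 4) else 0)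
   + 4*real N*(real k+1) * v (2*R+2+b div 4)
   + (if 2 \<le> b mod 4 then 4*real N*(real k+1) * v (P0 R + k) else 0)"
proof -
  have bd: "b div 4 < R" using assms by simp
  have "(\<Sum>c<tf_dim M. tf_W1 M b c * v c) =
     (\<Sum>c<tf_dim M. (if b mod 4 = 0 \<and> c = R+2+b div 4 then 1 else 0) * v c)
   + (\<Sum>c<tf_dim M. (if b mod 4 = 2 \<and> c = 3*R+2+b div 4 then real k + 1 else 0) * v c)
   + (\<Sum>c<tf_dim M. (if c = 2*R+2+b div 4 then 4*real N*(real k+1) else 0) * v c)
   + (\<Sum>c<tf_dim M. (if 2 \<le> b mod 4 \<and> c = P0 R + k then 4*real N*(real k+1) else 0) * v c)"
    by (simp add: mdl_def sum.distrib distrib_right)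
  also have "\<dots> = (if b mod 4 = 0 then v (R+2+b div 4) else 0)
   + (if b mod 4 = 2 then (real k + 1) * v (3*R+2+b div 4) else 0)
   + 4*real N*(real k+1) * v (2*R+2+b div 4)
   + (if 2 \<le> b mod 4 then 4*real N*(real k+1) * v (P0 R + k) else 0)"
    using bd kpos by (simp only: sdeltaP sdelta1 finite_lessThan) (simp add: dimM P0_def)
  finally show ?thesis .
qed

lemma widthM: "tf_width M = 4*R" by (simp add: mdl_def)
lemma W2M: "tf_W2 M a b = (if a = 1 then (if b mod 4 = 0 \<or> b mod 4 = 2 then 1 else -1) else 0)"
  by (simp add: mdl_def)
lemma b1M: "tf_b1 M b = (if b mod 4 < 2 then -(2*real N*(real k+1)) else -(6*real N*(real k+1)))"
  by (simp add: mdl_def)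

lemma mlp0: "mlp M v 0 = 0"
  unfolding mlp_def W2M by simp

lemma mlp1: "mlp M v 1 = (\<Sum>r<R. gate (real N) (real k+1) (v (R+2+r)) (v (3*R+2+r)) (v (2*R+2+r)) (v (P0 R + k)))"
proof -
  have "mlp M v 1 = (\<Sum>b<4*R. tf_W2 M 1 b * relu ((\<Sum>c<tf_dim M. tf_W1 M b c * v c) + tf_b1 M b))"
    unfolding mlp_def widthM ..
  also have "\<dots> = (\<Sum>r<R. gate (real N) (real k+1) (v (R+2+r)) (v (3*R+2+r)) (v (2*R+2+r)) (v (P0 R + k)))"
    unfolding sum4
  proof (rule sum.cong)
    fix r assume "r \<in> {..<R}"
    then have r: "r < R" by simp
    have a0: "4*r < 4*R" "4*r+1 < 4*R" "4*r+2 < 4*R" "4*r+3 < 4*R" using r by auto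
    have d: "(4*r) div 4 = r" "(4*r) mod 4 = 0" "(4*r+1) div 4 = r" "(4*r+1) mod 4 = 1"
        "(4*r+2) div 4 = r" "(4*r+2) mod 4 = 2" "(4*r+3) div 4 = r" "(4*r+3) mod 4 = 3" by presburger+
    show "tf_W2 M 1 (4*r) * relu ((\<Sum>c<tf_dim M. tf_W1 M (4*r) c * v c) + tf_b1 M (4*r)) +
          tf_W2 M 1 (4*r+1) * relu ((\<Sum>c<tf_dim M. tf_W1 M (4*r+1) c * v c) + tf_b1 M (4*r+1)) +
          tf_W2 M 1 (4*r+2) * relu ((\<Sum>c<tf_dim M. tf_W1 M (4*r+2) c * v c) + tf_b1 M (4*r+2)) +
          tf_W2 M 1 (4*r+3) * relu ((\<Sum>c<tf_dim M. tf_W1 M (4*r+3) c * v c) + tf_b1 M (4*r+3)) =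
          gate (real N) (real k+1) (v (R+2+r)) (v (3*R+2+r)) (v (2*R+2+r)) (v (P0 R + k))"
      unfolding preact[OF a0(1)] preact[OF a0(2)] preact[OF a0(3)] preact[OF a0(4)] W2M b1M gate_def d
      by (simp add: algebra_simps)
  qed simp
  finally show ?thesis .
qed

abbreviation "rstar \<equiv> rs ! length ss"
abbreviation "cs \<equiv> (if ss = [] then s0 else ss ! (length ss - 1))"

lemma rstar_in: "rstar \<in> {1..R}" using rsin ssl by simp
lemma cs_in: "cs \<in> {1..N}" using s0 ssin by auto

lemma tok_istar: "xs ! istar = Rel rstar"
  using tok[of istar] ssl by simp

lemma jle: "real j \<le> 2 * real k" using ssl by simp

abbreviation "Aw r \<equiv> (\<Sum>i\<le>j. attn_weight M xs 0 i j * (if xs!i = Rel r then 1 else 0))"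

lemma Aw_eq: "Aw r = (\<Sum>i\<le>j. (if i = istar then 6*real k else 1) * (if xs!i = Rel r then 1 else 0)) / (6*real k + real j)"
  by (simp add: w0 sum_divide_distrib)

lemma Dpos: "0 < 6*real k + real j" using kpos by simp

lemma Aw_star: "3/4 \<le> Aw rstar \<and> Aw rstar \<le> 1"
proof -
  let ?f = "\<lambda>i. (if i = istar then 6*real k else 1) * (if xs!i = Rel rstar then 1 else (0::real))"
  have "?f istar \<le> sum ?f {..j}"
    by (rule member_le_sum) (use ssl in auto)
  then have lo: "6 * real k \<le> sum ?f {..j}" using tok_istar by simp
  have "sum ?f {..j} \<le> (\<Sum>i\<le>j. (if i = istar then 6*real k else 1))"
    by (rule sum_mono) auto
  also have "\<dots> = (\<Sum>i\<le>j. exp (attn_score M xs 0 i j))"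
    by (rule sum.cong) (auto simp: expscore0)
  also have "\<dots> = 6 * real k + real j" by (rule denom0)
  finally have hi: "sum ?f {..j} \<le> 6 * real k + real j" .
  have "3/4 \<le> sum ?f {..j} / (6*real k + real j)"
    using lo jle Dpos by (simp add: le_divide_eq)
  moreover have "sum ?f {..j} / (6*real k + real j) \<le> 1"
    using hi Dpos by (simp add: divide_le_eq)
  ultimately show ?thesis using Aw_eq by simp
qed

lemma Aw_other: assumes "r \<noteq> rstar" shows "Aw r \<le> 1/4"
proof -
  let ?f = "\<lambda>i. (if i = istar then 6*real k else 1) * (if xs!i = Rel r then 1 else (0::real))"
  have "sum ?f {..j} \<le> (\<Sum>i\<le>j. 1 - (if i = istar then 1 else 0))"
    by (rule sum_mono) (use tok_istar assms in auto)
  also have "\<dots> = real j" using ssl by (simp add: sum_subtractf sum.delta)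
  finally have hi: "sum ?f {..j} \<le> real j" .
  have "sum ?f {..j} / (6*real k + real j) \<le> 1/4"
    using hi jle Dpos by (simp add: divide_le_eq)
  then show ?thesis using Aw_eq by simp
qed

lemma U_bd: assumes "r \<in> {1..R}" shows "0 \<le> xt (3*R+1+r) \<and> xt (3*R+1+r) \<le> real N"
proof -
  have "(\<Sum>i\<le>j. 1 / (real j + 1) * tabv g (xs!i) r) \<le> (\<Sum>i\<le>j. 1 / (real j + 1) * real N)"
  proof (rule sum_mono)
    fix i assume "i \<in> {..j}"
    then have "tabv g (xs!i) r \<le> real N" using tabv_bd assms by auto
    then show "1 / (real j + 1) * tabv g (xs!i) r \<le> 1 / (real j + 1) * real N"
      by (intro mult_left_mono) auto
  qed
  also have "\<dots> = real N" by (simp add: field_simps)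
  finally have hi: "(\<Sum>i\<le>j. 1 / (real j + 1) * tabv g (xs!i) r) \<le> real N" .
  have lo: "0 \<le> (\<Sum>i\<le>j. 1 / (real j + 1) * tabv g (xs!i) r)"
    by (rule sum_nonneg) (use tabv_bd assms in auto)
  show ?thesis using hi lo xt_T2[OF assms] by simp
qed

lemma U_k: assumes "r \<in> {1..R}" "ss = []"
  shows "(real k + 1) * xt (3*R+1+r) = real (g r s0)"
proof -
  have "(\<Sum>i\<le>j. 1 / (real j + 1) * tabv g (xs!i) r) = (\<Sum>i\<le>j. if i = 0 then 1 / (real j + 1) * real (g r s0) else 0)"
  proof (rule sum.cong)
    fix i assume "i \<in> {..j}"
    then show "1 / (real j + 1) * tabv g (xs!i) r = (if i = 0 then 1 / (real j + 1) * real (g r s0) else 0)"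
      using tok[of i] assms by (auto simp: tabv_def)
  qed simp
  also have "\<dots> = 1 / (real k + 1) * real (g r s0)" using assms by (simp add: sum.delta)
  finally show ?thesis using xt_T2[OF assms(1)] by simp
qed

lemma T_bd: assumes "r \<in> {1..R}" shows "0 \<le> xt (R+1+r) \<and> xt (R+1+r) \<le> real N"
  using xt_T[OF assms] tabv_bd[OF _ assms] by simp

lemma T_k: assumes "r \<in> {1..R}" "ss = []" shows "xt (R+1+r) = 0"
  using xt_T[OF assms(1)] tok[of j] assms kpos by (simp add: tabv_def)

lemma T_m: assumes "r \<in> {1..R}" "ss \<noteq> []" shows "xt (R+1+r) = real (g r cs)"
proof -
  have "xs ! j = Subj (ss ! (length ss - 1))" using tok[of j] assms by simp
  then show ?thesis using xt_T[OF assms(1)] assms by (simp add: tabv_def)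
qed

lemma gate_r: assumes "r < R"
  shows "gate (real N) (real k+1) (xt (R+2+r)) (xt (3*R+2+r)) (xt (2*R+2+r)) (xt (P0 R + k))
       = (if r + 1 = rstar then real (g rstar cs) else 0)"
proof -
  have r': "r+1 \<in> {1..R}" using assms by simp
  have e: "R+2+r = R+1+(r+1)" "3*R+2+r = 3*R+1+(r+1)" "2*R+2+r = 2*R+1+(r+1)" by auto
  have p: "xt (P0 R + k) = (if ss = [] then 1 else 0)" using xt_P by simp
  show ?thesis
  proof (cases "r + 1 = rstar")
    case rT: True
    have A: "3/4 \<le> xt (2*R+1+(r+1)) \<and> xt (2*R+1+(r+1)) \<le> 1" using Aw_star rT xt_S[OF r'] by simp
    show ?thesis
    proof (cases "ss = []")
      case sT: True
      have P1: "xt (P0 R + k) = 1" using p sT by simp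
      have G: "gate (real N) (real k+1) (xt (R+1+(r+1))) (xt (3*R+1+(r+1))) (xt (2*R+1+(r+1))) (xt (P0 R + k))
          = (if xt (P0 R + k) = 1 then (real k + 1) * xt (3*R+1+(r+1)) else xt (R+1+(r+1)))"
        by (rule gate_on) (use T_bd[OF r'] U_bd[OF r'] A P1 T_k[OF r' sT] in auto)
      have "gate (real N) (real k+1) (xt (R+1+(r+1))) (xt (3*R+1+(r+1))) (xt (2*R+1+(r+1))) (xt (P0 R + k))
          = real (g (r+1) s0)" (is "?l = _")
        unfolding G using P1 U_k[OF r' sT] by simp
      moreover have "real (g (r+1) s0) = (if r + 1 = rstar then real (g rstar cs) else 0)"
        using sT rT by simp
      ultimately show ?thesis unfolding e by (simp only:)
    next
      case sF: False
      have P1: "xt (P0 R + k) = 0" using p sF by simp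
      have G: "gate (real N) (real k+1) (xt (R+1+(r+1))) (xt (3*R+1+(r+1))) (xt (2*R+1+(r+1))) (xt (P0 R + k))
          = (if xt (P0 R + k) = 1 then (real k + 1) * xt (3*R+1+(r+1)) else xt (R+1+(r+1)))"
        by (rule gate_on) (use T_bd[OF r'] U_bd[OF r'] A P1 in auto)
      have "gate (real N) (real k+1) (xt (R+1+(r+1))) (xt (3*R+1+(r+1))) (xt (2*R+1+(r+1))) (xt (P0 R + k))
          = real (g (r+1) cs)"
        unfolding G using P1 T_m[OF r' sF] by simp
      moreover have "real (g (r+1) cs) = (if r + 1 = rstar then real (g rstar cs) else 0)"
        using rT by simp
      ultimately show ?thesis unfolding e by (simp only:)
    qed
  next
    case False
    have A: "xt (2*R+1+(r+1)) \<le> 1/4" using Aw_other[OF False] xt_S[OF r'] by simp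
    have "gate (real N) (real k+1) (xt (R+1+(r+1))) (xt (3*R+1+(r+1))) (xt (2*R+1+(r+1))) (xt (P0 R + k)) = 0"
      by (rule gate_off) (use T_bd[OF r'] U_bd[OF r'] A p in auto)
    then show ?thesis unfolding e using False by simp
  qed
qed

lemma out1: "mlp M xt 1 = real (g rstar cs)"
proof -
  have "mlp M xt 1 = (\<Sum>r<R. if r = rstar - 1 then real (g rstar cs) else 0)"
    unfolding mlp1 by (rule sum.cong) (use gate_r rstar_in in auto)
  also have "\<dots> = (if rstar - 1 \<in> {..<R} then real (g rstar cs) else 0)"
    by (rule sum.delta) simp
  also have "\<dots> = real (g rstar cs)" using rstar_in by auto
  finally show ?thesis .
qed

lemma out0: "tf_output M xs j 0 = 1"
  unfolding tf_output_def Let_def using xt_0 mlp0 by simp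

lemma out1': "tf_output M xs j 1 = real (g rstar cs)"
  unfolding tf_output_def Let_def using xt_1 out1 by simp

lemma logit2: "logit M xs t = tf_unemb M t 0 * tf_output M xs j 0 + tf_unemb M t 1 * tf_output M xs j 1"
proof -
  have "length xs - 1 = j" using len_xs by simp
  then have "logit M xs t = (\<Sum>a<tf_dim M. tf_unemb M t a * tf_output M xs j a)"
    unfolding logit_def by simp
  also have "\<dots> = tf_unemb M t 0 * tf_output M xs j 0 + tf_unemb M t 1 * tf_output M xs j 1"
    by (rule sum01) (auto simp: dimM P0_def mdl_def split: tok.splits)
  finally show ?thesis .
qed

lemma logitS: "logit M xs (Subj s) = 2 * real s * real (g rstar cs) - real s ^ 2"
  unfolding logit2 out0 out1' by (simp add: mdl_def)

lemma logitR: "logit M xs (Rel r) = -1"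
  unfolding logit2 out0 out1' by (simp add: mdl_def)

lemma dec: "decode M N R xs = Some (Subj (g rstar cs))"
proof -
  define z where "z = g rstar cs"
  have z: "z \<in> {1..N}" unfolding z_def using gin rstar_in cs_in by blast
  have zv: "Subj z \<in> vocab N R" using z by (simp add: vocab_def)
  have P: "\<forall>t'\<in>vocab N R. t' \<noteq> Subj z \<longrightarrow> logit M xs t' < logit M xs (Subj z)"
  proof (intro ballI impI)
    fix t' assume t': "t' \<in> vocab N R" "t' \<noteq> Subj z"
    have lz: "logit M xs (Subj z) = real z ^ 2" unfolding logitS z_def by (simp add: power2_eq_square)
    show "logit M xs t' < logit M xs (Subj z)"
    proof (cases t')
      case (Subj s)
      then have "real s \<noteq> real z" using t' by simp
      then have "0 < (real s - real z)^2" by simp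
      then have "2 * real s * real z < real s ^ 2 + real z ^ 2" by (simp add: power2_diff)
      then show ?thesis unfolding Subj logitS z_def[symmetric] by (simp add: power2_eq_square)
    next
      case (Rel r)
      have "0 \<le> real z ^ 2" by simp
      then show ?thesis unfolding Rel lz logitR by linarith
    qed
  qed
  have ex: "\<exists>t\<in>vocab N R. \<forall>t'\<in>vocab N R. t' \<noteq> t \<longrightarrow> logit M xs t' < logit M xs t"
    using zv P by blast
  have the: "(THE t. t \<in> vocab N R \<and> (\<forall>t'\<in>vocab N R. t' \<noteq> t \<longrightarrow> logit M xs t' < logit M xs t)) = Subj z"
  proof (rule the_equality)
    show "Subj z \<in> vocab N R \<and> (\<forall>t'\<in>vocab N R. t' \<noteq> Subj z \<longrightarrow> logit M xs t' < logit M xs (Subj z))"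
      using zv P by blast
  next
    fix t assume t: "t \<in> vocab N R \<and> (\<forall>t'\<in>vocab N R. t' \<noteq> t \<longrightarrow> logit M xs t' < logit M xs t)"
    show "t = Subj z"
    proof (rule ccontr)
      assume ne: "t \<noteq> Subj z"
      then have "Subj z \<noteq> t" by simp
      then have "logit M xs (Subj z) < logit M xs t" using t zv by blast
      moreover have "logit M xs t < logit M xs (Subj z)" using P t ne by blast
      ultimately show False by simp
    qed
  qed
  show ?thesis unfolding decode_def using ex the z_def by simp
qed

end

lemma cot:
  fixes N R k :: nat and g :: "nat \<Rightarrow> nat \<Rightarrow> nat" and s0 :: nat and rs :: "nat list"
  assumes N1: "N \<ge> 1" and R1: "R \<ge> 1" and bij: "\<forall>r\<in>{1..R}. bij_betw (g r) {1..N} {1..N}"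
  and s0: "s0 \<in> {1..N}" and rsl: "length rs = k" and rss: "set rs \<subseteq> {1..R}"
  shows "m + n = k \<Longrightarrow> cot_gen (mdl N R k g) N R (Subj s0 # map Rel rs @ map Subj (take m (hops g s0 rs))) n
           = Some (map Subj (drop m (hops g s0 rs)))"
proof (induction n arbitrary: m)
  case 0
  then have mk: "m = k" by simp
  have "drop m (hops g s0 rs) = []" using mk rsl by (simp add: hops_len)
  then show ?case by (simp only: cot_gen.simps list.map)
next
  case (Suc n)
  let ?H = "hops g s0 rs"
  have lH: "length ?H = k" using rsl by (simp add: hops_len)
  have mk: "m < k" using Suc.prems by simp
  have sH: "set ?H \<subseteq> {1..N}" using hops_set[OF bij s0 rss] .
  have ssub: "set (take m ?H) \<subseteq> {1..N}" using set_take_subset[of m "hops g s0 rs"] sH by (rule order_trans)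
  have lss: "length (take m ?H) = m" using lH mk by simp
  have d: "decode (mdl N R k g) N R (Subj s0 # map Rel rs @ map Subj (take m ?H))
      = Some (Subj (g (rs ! length (take m ?H))
          (if take m ?H = [] then s0 else take m ?H ! (length (take m ?H) - 1))))"
    by (rule dec[OF N1 R1 bij s0 rsl rss ssub]) (use lss mk in simp)
  have hm: "?H ! m = g (rs ! m) (if m = 0 then s0 else ?H ! (m-1))"
    using hops_nth[of m rs g s0] mk rsl by simp
  have "(g (rs ! length (take m ?H)) (if take m ?H = [] then s0 else take m ?H ! (length (take m ?H) - 1)))
      = ?H ! m"
    unfolding hm lss using mk lH by auto
  then have d': "decode (mdl N R k g) N R (Subj s0 # map Rel rs @ map Subj (take m ?H)) = Some (Subj (?H ! m))"
    using d by simp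
  have app: "(Subj s0 # map Rel rs @ map Subj (take m ?H)) @ [Subj (?H ! m)]
      = Subj s0 # map Rel rs @ map Subj (take (Suc m) ?H)"
    using mk lH by (simp add: take_Suc_conv_app_nth)
  have IH: "cot_gen (mdl N R k g) N R (Subj s0 # map Rel rs @ map Subj (take (Suc m) ?H)) n
      = Some (map Subj (drop (Suc m) ?H))"
  proof -
    have "Suc m + n = k" using Suc.prems by simp
    then show ?thesis by (rule Suc.IH)
  qed
  have dr: "drop m ?H = ?H ! m # drop (Suc m) ?H" using mk lH by (simp add: Cons_nth_drop_Suc)
  have "cot_gen (mdl N R k g) N R (Subj s0 # map Rel rs @ map Subj (take m ?H)) (Suc n)
      = map_option (Cons (Subj (?H ! m))) (cot_gen (mdl N R k g) N R
          ((Subj s0 # map Rel rs @ map Subj (take m ?H)) @ [Subj (?H ! m)]) n)"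
    by (simp only: cot_gen.simps d' option.case)
  also have "\<dots> = Some (map Subj (drop m ?H))"
    by (simp only: app IH dr option.map list.map)
  finally show ?case .
qed

theorem theorem4:
  shows "\<exists>(C::real) (c::real). C > 0 \<and>
    (\<forall>(N::nat) (R::nat) (k::nat) (g::nat \<Rightarrow> nat \<Rightarrow> nat).
       N \<ge> 1 \<longrightarrow> R \<ge> 1 \<longrightarrow>
       (\<forall>r\<in>{1..R}. bij_betw (g r) {1..N} {1..N}) \<longrightarrow>
       (\<exists>M::tf.
          real (tf_dim M) \<le> C * real (R + k) * ln (real (N + R + k + 2)) powr c \<and>
          real (tf_width M) \<le> C * real R * ln (real (N + R + k + 2)) powr c \<and>
          (\<forall>s0\<in>{1..N}. \<forall>rs. length rs = k \<and> set rs \<subseteq> {1..R} \<longrightarrow>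
             cot_gen M N R (Subj s0 # map Rel rs) k = Some (map Subj (hops g s0 rs)))))"
proof (rule exI[of _ "6::real"], rule exI[of _ "0::real"], intro conjI allI impI)
  show "(0::real) < 6" by simp
next
  fix N R k :: nat and g :: "nat \<Rightarrow> nat \<Rightarrow> nat"
  assume N1: "N \<ge> 1" and R1: "R \<ge> 1" and bij: "\<forall>r\<in>{1..R}. bij_betw (g r) {1..N} {1..N}"
  have "1 < real (N + R + k + 2)" by simp
  then have "0 < ln (real (N + R + k + 2))" by simp
  then have p1: "ln (real (N + R + k + 2)) powr 0 = 1" by simp
  show "\<exists>M::tf.
          real (tf_dim M) \<le> 6 * real (R + k) * ln (real (N + R + k + 2)) powr 0 \<and>
          real (tf_width M) \<le> 6 * real R * ln (real (N + R + k + 2)) powr 0 \<and>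
          (\<forall>s0\<in>{1..N}. \<forall>rs. length rs = k \<and> set rs \<subseteq> {1..R} \<longrightarrow>
             cot_gen M N R (Subj s0 # map Rel rs) k = Some (map Subj (hops g s0 rs)))"
  proof (rule exI[of _ "mdl N R k g"], intro conjI ballI allI impI)
    show "real (tf_dim (mdl N R k g)) \<le> 6 * real (R + k) * ln (real (N + R + k + 2)) powr 0"
      unfolding p1 using R1 by (simp add: mdl_def)
    show "real (tf_width (mdl N R k g)) \<le> 6 * real R * ln (real (N + R + k + 2)) powr 0"
      unfolding p1 by (simp add: mdl_def)
  next
    fix s0 rs assume s0: "s0 \<in> {1..N}" and rs: "length rs = k \<and> set rs \<subseteq> {1..R}"
    show "cot_gen (mdl N R k g) N R (Subj s0 # map Rel rs) k = Some (map Subj (hops g s0 rs))"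
      using cot[OF N1 R1 bij s0 conjunct1[OF rs] conjunct2[OF rs], of 0 k] by simp
  qed
qed

end
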